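(* Assume $k$ satisfies (A1)–(A3) and $\alpha>1$. Then the function $f_r:(0,\infty)\to\mathbb{R}$, $f_r(c)=\frac{k(c)-r}{c}$, has a unique critical point $c_{opt}$, i.e. a unique $c>0$ with $k'(c)=\frac{k(c)-r}{c}$, and $c_{opt}$ is a global maximizer of $f_r$ on $(0,\infty)$. Moreover, in the sigmoidal case (A3)(ii), $c_{opt}>c_{infl}$.
   Context: Let $r>0$ and let $k:[0,\infty)\to[0,\infty)$ satisfy: (A1) $k(0)=0$, $k$ is continuous and strictly increasing on $[0,\infty)$, and twice differentiable on $(0,\infty)$; (A2) $\lim_{c\to\infty}k(c)=k_{max}<\infty$; (A3) either (i) (concave case) $k''(c)<0$ for all $c>0$, or (ii) (sigmoidal case) there is $c_{infl}>0$ with $k''(c)>0$ for $0<c<c_{infl}$ and $k''(c)<0$ for $c>c_{infl}$. Set $\alpha=k_{max}/r$. *)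

theory Defs
  imports "HOL-Analysis.Analysis"
begin

end

theory Submission
  imports Defs
begin

lemma L1:
  fixes k :: "real \<Rightarrow> real"
  assumes k0: "k 0 = 0" and cont: "continuous_on {0..} k"
    and d1: "\<And>c. c>0 \<Longrightarrow> (k has_real_derivative deriv k c) (at c)"
    and d2: "\<And>c. c>0 \<Longrightarrow> (deriv k has_real_derivative deriv (deriv k) c) (at c)"
    and ci: "\<forall>c. 0<c \<and> c<ci \<longrightarrow> deriv (deriv k) c > 0"
    and c: "0 < c" "c \<le> ci"
  shows "c * deriv k c - k c > 0"
proof -
  have "continuous_on {0..c} k" using cont by (rule continuous_on_subset) auto
  moreover have "\<And>x. 0 < x \<Longrightarrow> x < c \<Longrightarrow> k differentiable (at x)"
    using d1 real_differentiable_def by blast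
  ultimately obtain l z where z: "0<z" "z<c" "DERIV k z :> l" "k c - k 0 = (c - 0) * l"
    using MVT[OF c(1)] by blast
  have l: "l = deriv k z" using DERIV_unique[OF z(3) d1[OF z(1)]] .
  obtain w where w: "z<w" "w<c" "deriv k c - deriv k z = (c - z) * deriv (deriv k) w"
    using MVT2[OF z(2), of "deriv k" "deriv (deriv k)"] d2 z(1) by force
  have "deriv (deriv k) w > 0" using ci w z c by auto
  hence "deriv k c > deriv k z" using w z by (smt (verit) mult_pos_pos)
  thus ?thesis using z l k0 c by (smt (verit) mult_strict_left_mono)
qed

lemma L2:
  fixes k :: "real \<Rightarrow> real"
  assumes d1: "\<And>c. c>0 \<Longrightarrow> (k has_real_derivative deriv k c) (at c)"
    and d2: "\<And>c. c>0 \<Longrightarrow> (deriv k has_real_derivative deriv (deriv k) c) (at c)"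
    and neg: "\<forall>c>a0. deriv (deriv k) c < 0" and a0: "a0 \<ge> 0"
    and ab: "a0 < a" "a < b"
  shows "b * deriv k b - k b < a * deriv k a - k a"
proof -
  have D: "((\<lambda>x. x * deriv k x - k x) has_real_derivative x * deriv (deriv k) x) (at x)"
    if "x > 0" for x
    using d1[OF that] d2[OF that]
    by (auto intro!: derivative_eq_intros)
  obtain z where z: "a<z" "z<b"
    "(b * deriv k b - k b) - (a * deriv k a - k a) = (b - a) * (z * deriv (deriv k) z)"
    using MVT2[OF ab(2), of "\<lambda>x. x * deriv k x - k x" "\<lambda>x. x * deriv (deriv k) x"] D ab a0
    by force
  have "z * deriv (deriv k) z < 0" using neg z ab a0 by (simp add: mult_pos_neg)
  hence "(b - a) * (z * deriv (deriv k) z) < 0" using ab by (simp add: mult_pos_neg)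
  thus ?thesis using z by linarith
qed

theorem lemma1:
  fixes k :: "real \<Rightarrow> real" and r kmax :: real
  assumes r_pos: "r > 0"
    and k_nonneg: "\<forall>c\<ge>0. k c \<ge> 0"
    and k0: "k 0 = 0"
    and k_cont: "continuous_on {0..} k"
    and k_mono: "strict_mono_on {0..} k"
    and k_diff: "\<forall>c>0. k differentiable (at c)"
    and k_diff2: "\<forall>c>0. (deriv k) differentiable (at c)"
    and k_lim: "(k \<longlongrightarrow> kmax) at_top"
    and A3: "(\<forall>c>0. deriv (deriv k) c < 0) \<or>
             (\<exists>ci>0. (\<forall>c. 0 < c \<and> c < ci \<longrightarrow> deriv (deriv k) c > 0) \<and>
                      (\<forall>c>ci. deriv (deriv k) c < 0))"
    and alpha_gt: "kmax / r > 1"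
  shows "\<exists>copt>0. deriv k copt = (k copt - r) / copt
           \<and> (\<forall>c>0. deriv k c = (k c - r) / c \<longrightarrow> c = copt)
           \<and> (\<forall>c>0. (k c - r) / c \<le> (k copt - r) / copt)
           \<and> (\<forall>ci>0. (\<forall>c. 0 < c \<and> c < ci \<longrightarrow> deriv (deriv k) c > 0) \<and>
                     (\<forall>c>ci. deriv (deriv k) c < 0) \<longrightarrow> ci < copt)"
proof -
  have d1: "\<And>c. c>0 \<Longrightarrow> (k has_real_derivative deriv k c) (at c)"
    using k_diff DERIV_deriv_iff_real_differentiable by blast
  have d2: "\<And>c. c>0 \<Longrightarrow> (deriv k has_real_derivative deriv (deriv k) c) (at c)"
    using k_diff2 DERIV_deriv_iff_real_differentiable by blast
  have kmax_r: "kmax > r" using alpha_gt r_pos by (simp add: field_simps)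
  define f where "f = (\<lambda>c. (k c - r) / c)"
  define g where "g = (\<lambda>c. c * deriv k c - k c)"
  obtain a0 where a0: "a0 \<ge> 0" "\<forall>c>a0. deriv (deriv k) c < 0"
    "\<forall>c. 0<c \<and> c<a0 \<longrightarrow> deriv (deriv k) c > 0"
    using A3 by (metis less_eq_real_def order.refl less_asym)
  have gpos: "g c > 0" if "0 < c" "c \<le> a0" for c
    using L1[OF k0 k_cont d1 d2 a0(3) that] unfolding g_def by simp
  have gdec: "g b < g a" if "a0 < a" "a < b" for a b
    using L2[OF d1 d2 a0(2) a0(1) that] unfolding g_def by simp
  have kle: "k c \<le> kmax" if "c \<ge> 0" for c
  proof (rule ccontr)
    assume "\<not> k c \<le> kmax"
    hence "eventually (\<lambda>t. k t < k c) at_top" using order_tendstoD(2)[OF k_lim] by simp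
    moreover have "eventually (\<lambda>t. t \<ge> c + 1) at_top" by (rule eventually_ge_at_top)
    ultimately have "eventually (\<lambda>t. k t < k c \<and> t \<ge> c + 1) at_top"
      by (rule eventually_conj)
    then obtain t where "k t < k c" "t \<ge> c + 1" unfolding eventually_at_top_linorder by blast
    moreover have "k c < k t" using strict_mono_onD[OF k_mono, of c t] that \<open>t \<ge> c+1\<close> by auto
    ultimately show False by simp
  qed
  obtain c1 where c1: "c1 > 0" "k c1 > r"
  proof -
    have "eventually (\<lambda>t. k t > r) at_top" using order_tendstoD(1)[OF k_lim kmax_r] .
    then obtain N where N: "\<And>t. t \<ge> N \<Longrightarrow> k t > r" by (auto simp: eventually_at_top_linorder)
    show ?thesis using that[of "max N 1"] N[of "max N 1"] by auto
  qed
  have fc1: "f c1 > 0" using c1 unfolding f_def by simp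
  obtain c0 where c0: "c0 > 0" "k c0 < r"
  proof -
    obtain d where d: "d > 0" "\<forall>x\<in>{0..}. dist x 0 < d \<longrightarrow> dist (k x) (k 0) < r"
      using k_cont r_pos unfolding continuous_on_iff by (metis atLeast_iff order.refl)
    have "\<bar>k (d/2)\<bar> < r" using d by (auto simp: dist_real_def k0)
    thus ?thesis using that[of "d/2"] d by auto
  qed
  have fsmall: "f c < 0" if "0 < c" "c \<le> c0" for c
  proof -
    have "k c \<le> k c0" using strict_mono_onD[OF k_mono, of c c0] that
      by (cases "c = c0") auto
    thus ?thesis using that c0 unfolding f_def by (simp add: divide_neg_pos)
  qed
  define C where "C = 2 * (kmax - r) / f c1 + c1 + 1"
  have "2 * (kmax - r) / f c1 > 0" using kmax_r fc1 by simp
  hence C: "C > c1" unfolding C_def by simp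
  have flarge: "f c < f c1" if "c \<ge> C" for c
  proof -
    have cpos: "c > 0" using that C c1 by linarith
    have "f c \<le> (kmax - r) / c" unfolding f_def using kle[of c] cpos
      by (simp add: divide_right_mono)
    also have "\<dots> \<le> (kmax - r) / C" using kmax_r that cpos C c1
      by (intro divide_left_mono) auto
    also have "\<dots> < f c1"
    proof -
      have "C > 2 * (kmax - r) / f c1" unfolding C_def using c1 by simp
      hence "C * f c1 > 2 * (kmax - r)" using fc1 by (simp add: field_simps)
      hence "(kmax - r) < C * f c1" using kmax_r by (smt (verit))
      thus ?thesis using C c1 by (simp add: field_simps)
    qed
    finally show ?thesis .
  qed
  have c0c1: "c0 < c1" using fsmall[of c1] fc1 c1 by force
  have fcont: "continuous_on {c0..C} f" unfolding f_def
    by (intro continuous_intros continuous_on_subset[OF k_cont]) (use c0 in auto)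
  obtain m where m: "m \<in> {c0..C}" "\<forall>y\<in>{c0..C}. f y \<le> f m"
    using continuous_attains_sup[OF compact_Icc _ fcont] c0c1 C by auto
  have fm: "f m \<ge> f c1" using m c0c1 C by auto
  have mpos: "m > 0" using m c0 by auto
  have fmax: "f y \<le> f m" if "y > 0" for y
  proof (cases "y \<le> c0")
    case True then show ?thesis using fsmall[OF that True] fm fc1 by linarith
  next
    case False
    show ?thesis
    proof (cases "y \<ge> C")
      case True then show ?thesis using flarge fm by force
    next
      case F2: False then show ?thesis using m False by auto
    qed
  qed
  have Df: "DERIV f m :> (deriv k m * m - (k m - r) * 1) / (m * m)"
    unfolding f_def using d1[OF mpos] mpos
    by (auto intro!: derivative_eq_intros)
  have "(deriv k m * m - (k m - r) * 1) / (m * m) = 0"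
    by (rule DERIV_local_max[OF Df mpos]) (use fmax in \<open>auto simp: abs_if split: if_splits\<close>)
  hence crit: "deriv k m = (k m - r) / m" using mpos by (simp add: field_simps)
  have gm: "g m = - r" using crit mpos unfolding g_def by (simp add: field_simps)
  have ma0: "m > a0" using gpos[OF mpos] gm r_pos by force
  show ?thesis
  proof (intro exI[of _ m] conjI allI impI)
    show "m > 0" by fact
    show "deriv k m = (k m - r) / m" by fact
  next
    fix c assume c: "c > 0" "deriv k c = (k c - r) / c"
    have gc: "g c = - r" using c unfolding g_def by (simp add: field_simps)
    have ca0: "c > a0" using gpos[OF c(1)] gc r_pos by force
    show "c = m"
    proof (rule ccontr)
      assume "c \<noteq> m"
      hence "c < m \<or> m < c" by auto
      thus False using gdec[OF ca0, of m] gdec[OF ma0, of c] gc gm by auto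
    qed
  next
    fix c :: real assume "c > 0"
    thus "(k c - r) / c \<le> (k m - r) / m" using fmax unfolding f_def by auto
  next
    fix ci :: real assume ci: "ci > 0"
      "(\<forall>c. 0 < c \<and> c < ci \<longrightarrow> deriv (deriv k) c > 0) \<and> (\<forall>c>ci. deriv (deriv k) c < 0)"
    show "ci < m"
    proof (rule ccontr)
      assume "\<not> ci < m"
      hence "g m > 0" using L1[OF k0 k_cont d1 d2 conjunct1[OF ci(2)] mpos] unfolding g_def by simp
      thus False using gm r_pos by simp
    qed
  qed
qed

end
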